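(* Let $m=2$ and $n>4$. Let $\mathcal{C}$ be the class of all complete acyclic binary tree CP-nets over $n$ variables, over $\mathcal{X}_{swap}$. (1) If $|F^1(x)\cap L|\le n-4$ for every $x\in\mathcal{X}_{swap}$, then $\mathcal{C}$ is learnable with membership queries to a limited oracle. (2) If $|F^1(x)\cap L|\le\lfloor\frac{n-1}{2}\rfloor-2$ for every $x\in\mathcal{X}_{swap}$, then $\mathcal{C}$ is learnable with membership queries to a malicious oracle. In either case, the worst-case number of queries is in $O(n^2+e_{N^*}n\log_2(n))$, where $e_{N^*}$ is the number of edges of the target CP-net $N^*$.
   Context: Variables $V=\{v_1,\dots,v_n\}$ with binary domains. An outcome assigns a value to every variable. A complete CP-net gives each $v_i$ a parent set $Pa(v_i)\subseteq V\setminus\{v_i\}$ and, for each assignment to $Pa(v_i)$, a strict order on $D_{v_i}$; parents are non-dummy. A tree CP-net is acyclic (parent graph with edges $(v_j,v_i)$, $v_j\in Pa(v_i)$, has no cycle) with every $|Pa(v_i)|\le 1$. Improving flip: changing only $v_i$ to the value preferred under the order for context $o[Pa(v_i)]$; $o'\succ o$ iff a nonempty sequence of improving flips leads from $o$ to $o'$. A swap is an ordered pair $x=(x.1,x.2)$ of outcomes differing in exactly one variable $V(x)$; $\mathcal{X}_{swap}$ contains exactly one ordering of each such pair (fixed arbitrarily); the target concept is $c^*(x)=1$ iff $x.1\succ x.2$ under the target $N^*$. $F^1(x)$ is the set of swaps $x'\in\mathcal{X}_{swap}$ with $V(x')=V(x)$ whose outcomes differ from those of $x$ in exactly one variable other than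 $V(x)$. A set $L\subseteq\mathcal{X}_{swap}$ is fixed in advance by an adversary and unknown to the learner. A limited oracle answers $c^*(x)$ for $x\notin L$ and "I don't know" for $x\in L$; a malicious oracle answers $c^*(x)$ for $x\notin L$ and $1-c^*(x)$ for $x\in L$; both are persistent. A class is learnable with membership queries to a limited (malicious) oracle if some algorithm exactly identifies every target using a number of queries polynomial in $n$, the target's size (number of CPT statements) and $|L|$. *)

theory Defs
  imports Complex_Main
begin

text \<open>Variables are 0..n-1, binary domains are bool.  An outcome is a function
  nat => bool that is False outside {..<n} (canonical representation).\<close>

type_synonym outcome = "nat \<Rightarrow> bool"
type_synonym swap = "outcome \<times> outcome"

text \<open>A tree CP-net is represented as (par, pref): par i = Some j means Pa(v_i) = {v_j},
  par i = None means Pa(v_i) is empty; pref i b is the preferred value of v_i when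
  its parent has value b (for parentless variables pref i is constant).  The
  conventions in tree_cpnet make the representation unique, so exact identification
  is equality of representations.\<close>

type_synonym cpnet = "(nat \<Rightarrow> nat option) \<times> (nat \<Rightarrow> bool \<Rightarrow> bool)"

definition outcomes :: "nat \<Rightarrow> outcome set" where
  "outcomes n = {w. \<forall>j\<ge>n. w j = False}"

definition diffs :: "outcome \<Rightarrow> outcome \<Rightarrow> nat set" where
  "diffs a b = {i. a i \<noteq> b i}"

definition flip :: "nat \<Rightarrow> outcome \<Rightarrow> outcome" where
  "flip j w = w(j := \<not> w j)"

definition tree_cpnet :: "nat \<Rightarrow> cpnet \<Rightarrow> bool" where
  "tree_cpnet n N \<longleftrightarrow>
     (\<forall>i j. fst N i = Some j \<longrightarrow> i < n \<and> j < n \<and> j \<noteq> i) \<and>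
     (\<forall>i\<ge>n. fst N i = None \<and> snd N i = (\<lambda>_. False)) \<and>
     (\<forall>i<n. fst N i = None \<longrightarrow> snd N i True = snd N i False) \<and>
     (\<forall>i<n. fst N i \<noteq> None \<longrightarrow> snd N i True \<noteq> snd N i False) \<and>
     acyclic {(j, i). fst N i = Some j}"

definition ctx :: "cpnet \<Rightarrow> outcome \<Rightarrow> nat \<Rightarrow> bool" where
  "ctx N w i = (case fst N i of None \<Rightarrow> False | Some j \<Rightarrow> w j)"

definition improving_flip :: "nat \<Rightarrow> cpnet \<Rightarrow> outcome \<Rightarrow> outcome \<Rightarrow> bool" where
  "improving_flip n N w w' \<longleftrightarrow> w \<in> outcomes n \<and>
     (\<exists>i<n. w i \<noteq> snd N i (ctx N w i) \<and> w' = w(i := snd N i (ctx N w i)))"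

text \<open>prefers n N w' w  means  w' \<succ> w  (nonempty sequence of improving flips from w to w')\<close>
definition prefers :: "nat \<Rightarrow> cpnet \<Rightarrow> outcome \<Rightarrow> outcome \<Rightarrow> bool" where
  "prefers n N w' w \<longleftrightarrow> (improving_flip n N)\<^sup>+\<^sup>+ w w'"

definition swaps :: "nat \<Rightarrow> swap set" where
  "swaps n = {(a, b). a \<in> outcomes n \<and> b \<in> outcomes n \<and> (\<exists>i<n. diffs a b = {i})}"

definition swap_set :: "nat \<Rightarrow> swap set \<Rightarrow> bool" where
  "swap_set n X \<longleftrightarrow> X \<subseteq> swaps n \<and> (\<forall>a b. (a, b) \<in> swaps n \<longrightarrow> ((a, b) \<in> X \<longleftrightarrow> (b, a) \<notin> X))"

definition swap_var :: "swap \<Rightarrow> nat" where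
  "swap_var x = (THE i. diffs (fst x) (snd x) = {i})"

definition F1 :: "nat \<Rightarrow> swap set \<Rightarrow> swap \<Rightarrow> swap set" where
  "F1 n X x = {x' \<in> X. swap_var x' = swap_var x \<and>
      (\<exists>j<n. j \<noteq> swap_var x \<and> {fst x', snd x'} = {flip j (fst x), flip j (snd x)})}"

definition concept :: "nat \<Rightarrow> cpnet \<Rightarrow> swap \<Rightarrow> bool" where
  "concept n N x \<longleftrightarrow> prefers n N (fst x) (snd x)"

definition num_edges :: "cpnet \<Rightarrow> nat" where
  "num_edges N = card {i. fst N i \<noteq> None}"

text \<open>number of CPT statements: 2^|Pa(v_i)| per variable\<close>
definition cpt_size :: "nat \<Rightarrow> cpnet \<Rightarrow> nat" where
  "cpt_size n N = n + num_edges N"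

text \<open>Oracles (persistent: deterministic functions of the query).
  Limited oracle: None = "I don't know".\<close>
definition limited_oracle :: "nat \<Rightarrow> cpnet \<Rightarrow> swap set \<Rightarrow> swap \<Rightarrow> bool option" where
  "limited_oracle n N L x = (if x \<in> L then None else Some (concept n N x))"

definition malicious_oracle :: "nat \<Rightarrow> cpnet \<Rightarrow> swap set \<Rightarrow> swap \<Rightarrow> bool" where
  "malicious_oracle n N L x = (if x \<in> L then \<not> concept n N x else concept n N x)"

text \<open>Adaptive query algorithms as decision trees.\<close>
datatype ('q, 'a, 'r) strat = Done 'r | Ask 'q "'a \<Rightarrow> ('q, 'a, 'r) strat"

primrec run :: "('q \<Rightarrow> 'a) \<Rightarrow> 'q set \<Rightarrow> ('q, 'a, 'r) strat \<Rightarrow> ('r \<times> nat) option" where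
  "run orc Q (Done r) = Some (r, 0)"
| "run orc Q (Ask q k) = (if q \<in> Q then map_option (\<lambda>(r, c). (r, Suc c)) (run orc Q (k (orc q))) else None)"

definition learns_with ::
  "(nat \<Rightarrow> cpnet \<Rightarrow> swap set \<Rightarrow> swap \<Rightarrow> 'a) \<Rightarrow> (nat \<Rightarrow> swap set \<Rightarrow> swap set \<Rightarrow> bool)
    \<Rightarrow> (nat \<Rightarrow> cpnet \<Rightarrow> nat \<Rightarrow> real) \<Rightarrow> bool" where
  "learns_with orc P B \<longleftrightarrow>
    (\<exists>S :: nat \<Rightarrow> swap set \<Rightarrow> (swap, 'a, cpnet) strat.
       \<forall>n X N L. swap_set n X \<longrightarrow> tree_cpnet n N \<longrightarrow> L \<subseteq> X \<longrightarrow> P n X L \<longrightarrow>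
         (\<exists>q. run (orc n N L) X (S n X) = Some (N, q) \<and> real q \<le> B n N (card L)))"

definition learnable ::
  "(nat \<Rightarrow> cpnet \<Rightarrow> swap set \<Rightarrow> swap \<Rightarrow> 'a) \<Rightarrow> (nat \<Rightarrow> swap set \<Rightarrow> swap set \<Rightarrow> bool) \<Rightarrow> bool" where
  "learnable orc P \<longleftrightarrow> (\<exists>c d. learns_with orc P (\<lambda>n N l. c * real (n + cpt_size n N + l + 1) ^ d))"

definition query_bound :: "nat \<Rightarrow> cpnet \<Rightarrow> nat \<Rightarrow> real" where
  "query_bound n N l = real n ^ 2 + real (num_edges N) * real n * log 2 (real n)"

end

theory Submission
  imports Defs
begin


primrec sbind :: "('q,'a,'r) strat \<Rightarrow> ('r \<Rightarrow> ('q,'a,'s) strat) \<Rightarrow> ('q,'a,'s) strat" where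
  "sbind (Done r) f = f r"
| "sbind (Ask q k) f = Ask q (\<lambda>a. sbind (k a) f)"

lemma run_sbind:
  "run orc Q s = Some (r, c) \<Longrightarrow> run orc Q (f r) = Some (r', c') \<Longrightarrow>
   run orc Q (sbind s f) = Some (r', c + c')"
proof (induction s arbitrary: c)
  case (Done x) then show ?case by simp
next
  case (Ask q k)
  then show ?case by (auto split: if_splits)
qed

fun askf :: "'i list \<Rightarrow> ('i \<Rightarrow> 'q) \<Rightarrow> ('q,'a,'i \<Rightarrow> 'a) strat" where
  "askf [] qf = Done (\<lambda>_. undefined)"
| "askf (j#js) qf = Ask (qf j) (\<lambda>a. sbind (askf js qf) (\<lambda>f. Done (f(j:=a))))"

lemma run_askf:
  "set (map qf js) \<subseteq> Q \<Longrightarrow> \<exists>f. run orc Q (askf js qf) = Some (f, length js) \<and> (\<forall>j\<in>set js. f j = orc (qf j))"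
proof (induction js)
  case Nil then show ?case by simp
next
  case (Cons j js)
  then obtain f where f: "run orc Q (askf js qf) = Some (f, length js)" "\<forall>j\<in>set js. f j = orc (qf j)" by auto
  have "run orc Q (sbind (askf js qf) (\<lambda>f. Done (f(j:=orc (qf j))))) = Some (f(j:=orc (qf j)), length js + 0)"
    by (rule run_sbind[OF f(1)]) simp
  then show ?case using Cons.prems f(2) by auto
qed

fun seqall :: "('q,'a,'r) strat list \<Rightarrow> ('q,'a,'r list) strat" where
  "seqall [] = Done []"
| "seqall (s#ss) = sbind s (\<lambda>r. sbind (seqall ss) (\<lambda>rs. Done (r#rs)))"

lemma run_seqall:
  "(\<forall>x\<in>set xs. run orc Q (g x) = Some (f x, c x)) \<Longrightarrow>
   run orc Q (seqall (map g xs)) = Some (map f xs, sum_list (map c xs))"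
proof (induction xs)
  case Nil then show ?case by simp
next
  case (Cons x xs)
  then have h: "run orc Q (seqall (map g xs)) = Some (map f xs, sum_list (map c xs))" by auto
  have "run orc Q (sbind (seqall (map g xs)) (\<lambda>rs. Done (f x # rs))) = Some (f x # map f xs, sum_list (map c xs) + 0)"
    by (rule run_sbind[OF h]) simp
  then show ?case using Cons.prems by (auto intro!: run_sbind[where r="f x" and c="c x", THEN trans])
qed




definition Erel :: "cpnet \<Rightarrow> (nat \<times> nat) set" where
  "Erel N = {(j, i). fst N i = Some j}"

definition dep :: "cpnet \<Rightarrow> nat \<Rightarrow> nat" where
  "dep N i = card {j. (j, i) \<in> (Erel N)\<^sup>+}"

lemma anc_sub: assumes "tree_cpnet n N" shows "{j. (j, i) \<in> (Erel N)\<^sup>+} \<subseteq> {..<n}"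
proof
  fix j assume "j \<in> {j. (j, i) \<in> (Erel N)\<^sup>+}"
  then obtain z where "(j, z) \<in> Erel N" by (auto dest: tranclD)
  then show "j \<in> {..<n}" using assms unfolding tree_cpnet_def Erel_def by auto
qed

lemma dep_le: "tree_cpnet n N \<Longrightarrow> dep N i \<le> n"
  unfolding dep_def using card_mono[OF finite_lessThan anc_sub, of n N i] by simp

lemma dep_lt: assumes "tree_cpnet n N" "fst N i = Some p" shows "dep N p < dep N i"
proof -
  have e: "(p, i) \<in> Erel N" using assms(2) by (simp add: Erel_def)
  have ac: "acyclic (Erel N)" using assms(1) unfolding tree_cpnet_def Erel_def by simp
  have "{j. (j, p) \<in> (Erel N)\<^sup>+} \<subset> {j. (j, i) \<in> (Erel N)\<^sup>+}"
  proof
    show "{j. (j, p) \<in> (Erel N)\<^sup>+} \<subseteq> {j. (j, i) \<in> (Erel N)\<^sup>+}"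
      using e by (auto intro: trancl_into_trancl)
    have "p \<in> {j. (j, i) \<in> (Erel N)\<^sup>+}" using e by auto
    moreover have "p \<notin> {j. (j, p) \<in> (Erel N)\<^sup>+}" using ac by (auto simp: acyclic_def)
    ultimately show "{j. (j, p) \<in> (Erel N)\<^sup>+} \<noteq> {j. (j, i) \<in> (Erel N)\<^sup>+}" by blast
  qed
  moreover have "finite {j. (j, i) \<in> (Erel N)\<^sup>+}" using anc_sub[OF assms(1)] finite_subset by blast
  ultimately show ?thesis unfolding dep_def by (rule psubset_card_mono[rotated])
qed

definition Wt :: "nat \<Rightarrow> cpnet \<Rightarrow> nat \<Rightarrow> nat" where
  "Wt n N m = (n+1) ^ (n - dep N m)"

definition bad :: "cpnet \<Rightarrow> outcome \<Rightarrow> nat \<Rightarrow> bool" where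
  "bad N w m \<longleftrightarrow> w m \<noteq> snd N m (ctx N w m)"

definition pot :: "nat \<Rightarrow> cpnet \<Rightarrow> outcome \<Rightarrow> nat" where
  "pot n N w = (\<Sum>m<n. if bad N w m then Wt n N m else 0)"

lemma ctx_upd: "fst N m \<noteq> Some i \<Longrightarrow> ctx N (w(i := v)) m = ctx N w m"
  unfolding ctx_def by (cases "fst N m") auto

lemma pot_dec:
  assumes T: "tree_cpnet n N" and F: "improving_flip n N w w'"
  shows "pot n N w' < pot n N w"
proof -
  obtain i where i: "i < n" "w i \<noteq> snd N i (ctx N w i)" "w' = w(i := snd N i (ctx N w i))"
    using F unfolding improving_flip_def by auto
  define Ch where "Ch = {m. m < n \<and> fst N m = Some i}"
  have noself: "fst N i \<noteq> Some i" using T unfolding tree_cpnet_def by auto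
  let ?t = "\<lambda>w m. if bad N w m then Wt n N m else 0"
  have pw: "?t w' m + (if m = i then Wt n N m else 0) \<le> ?t w m + (if m \<in> Ch then Wt n N m else 0)"
    if "m < n" for m
  proof (cases "m = i")
    case True
    have "\<not> bad N w' i" using i(3) ctx_upd[OF noself, of w] by (simp add: bad_def)
    moreover have "bad N w i" using i(2) by (simp add: bad_def)
    ultimately show ?thesis using True by simp
  next
    case False
    show ?thesis
    proof (cases "m \<in> Ch")
      case True then show ?thesis using False by auto
    next
      case nc: False
      then have "fst N m \<noteq> Some i" using that Ch_def by auto
      then show ?thesis using False i(3) ctx_upd[of N m i w] by (auto simp: bad_def)
    qed
  qed
  have "(\<Sum>m<n. ?t w' m + (if m = i then Wt n N m else 0)) \<le> (\<Sum>m<n. ?t w m + (if m \<in> Ch then Wt n N m else 0))"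
    by (rule sum_mono) (use pw in auto)
  moreover have "(\<Sum>m<n. (if m = i then Wt n N m else 0)) = Wt n N i" using i(1) by simp
  moreover have "(\<Sum>m<n. (if m \<in> Ch then Wt n N m else 0)) = (\<Sum>m\<in>Ch. Wt n N m)"
  proof -
    have "Ch \<subseteq> {..<n}" by (auto simp: Ch_def)
    then show ?thesis by (simp add: sum.If_cases Int_absorb1 inf_absorb2)
  qed
  ultimately have A: "pot n N w' + Wt n N i \<le> pot n N w + (\<Sum>m\<in>Ch. Wt n N m)"
    unfolding pot_def by (simp add: sum.distrib)
  have B: "(\<Sum>m\<in>Ch. Wt n N m) < Wt n N i"
  proof (cases "Ch = {}")
    case True then show ?thesis by (simp add: Wt_def)
  next
    case False
    then obtain m0 where m0: "m0 \<in> Ch" by auto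
    have di: "dep N i < n" using dep_lt[OF T, of m0 i] dep_le[OF T, of m0] m0 Ch_def by auto
    have le: "Wt n N m \<le> (n+1) ^ (n - dep N i - 1)" if "m \<in> Ch" for m
    proof -
      have "dep N i < dep N m" using dep_lt[OF T, of m i] that Ch_def by auto
      then have "n - dep N m \<le> n - dep N i - 1" by auto
      then show ?thesis unfolding Wt_def by (rule power_increasing) simp
    qed
    have cc: "card Ch \<le> n" using card_mono[of "{..<n}" Ch] by (auto simp: Ch_def)
    have "(\<Sum>m\<in>Ch. Wt n N m) \<le> card Ch * (n+1) ^ (n - dep N i - 1)"
      using sum_bounded_above[of Ch "Wt n N" "(n+1) ^ (n - dep N i - 1)"] le by auto
    also have "\<dots> \<le> n * (n+1) ^ (n - dep N i - 1)" using cc by simp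
    also have "\<dots> < (n+1) * (n+1) ^ (n - dep N i - 1)" by simp
    also have "\<dots> = Wt n N i" unfolding Wt_def using di
      by (metis Suc_diff_Suc diff_Suc_1 power_Suc)
    finally show ?thesis .
  qed
  from A B show ?thesis by linarith
qed

lemma pot_trancl: assumes T: "tree_cpnet n N" and R: "(improving_flip n N)\<^sup>+\<^sup>+ w w'" shows "pot n N w' < pot n N w"
  using R by (induction rule: tranclp_induct) (auto dest: pot_dec[OF T])

lemma no_cycle: "tree_cpnet n N \<Longrightarrow> \<not> (improving_flip n N)\<^sup>+\<^sup>+ w w"
  using pot_trancl by blast

definition g :: "cpnet \<Rightarrow> nat \<Rightarrow> outcome \<Rightarrow> bool" where
  "g N i v = snd N i (ctx N v i)"

lemma concept_swap:
  assumes T: "tree_cpnet n N" and a: "a \<in> outcomes n" and b: "b \<in> outcomes n" and i: "i < n"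
    and d: "diffs a b = {i}"
  shows "concept n N (a, b) \<longleftrightarrow> a i = g N i a"
proof -
  have noself: "fst N i \<noteq> Some i" using T unfolding tree_cpnet_def by auto
  have ab: "a i \<noteq> b i" "\<And>m. m \<noteq> i \<Longrightarrow> a m = b m" using d unfolding diffs_def by auto
  have bu: "b = a(i := b i)" by (intro ext) (metis ab(2) fun_upd_apply)
  have au: "a = b(i := a i)" by (intro ext) (metis ab(2) fun_upd_apply)
  have cb: "ctx N b i = ctx N a i" using ctx_upd[OF noself, of a "b i"] bu by simp
  show ?thesis
  proof
    assume c: "concept n N (a, b)"
    show "a i = g N i a"
    proof (rule ccontr)
      assume "a i \<noteq> g N i a"
      then have "improving_flip n N a b" using a i ab(1) bu unfolding improving_flip_def g_def
        by (intro conjI exI[of _ i]) auto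
      moreover have "(improving_flip n N)\<^sup>+\<^sup>+ b a" using c unfolding concept_def prefers_def by simp
      ultimately have "(improving_flip n N)\<^sup>+\<^sup>+ a a" by auto
      then show False using no_cycle[OF T] by blast
    qed
  next
    assume "a i = g N i a"
    then have "improving_flip n N b a" using b i ab(1) au cb unfolding improving_flip_def g_def
      by (intro conjI exI[of _ i]) auto
    then show "concept n N (a, b)" unfolding concept_def prefers_def by auto
  qed
qed




definition sw :: "swap set \<Rightarrow> nat \<Rightarrow> outcome \<Rightarrow> swap" where
  "sw X i v = (if (v, flip i v) \<in> X then (v, flip i v) else (flip i v, v))"

lemma flip_out: "v \<in> outcomes n \<Longrightarrow> j < n \<Longrightarrow> flip j v \<in> outcomes n"
  unfolding outcomes_def flip_def by auto

lemma diffs_flip: "diffs v (flip i v) = {i}" "diffs (flip i v) v = {i}"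
  unfolding diffs_def flip_def by auto

lemma flip_flip: "flip i (flip i v) = v"
  unfolding flip_def by auto

lemma flip_comm: "flip i (flip j v) = flip j (flip i v)"
  unfolding flip_def by (rule ext) simp

lemma sw_cases: "sw X i v = (v, flip i v) \<or> sw X i v = (flip i v, v)"
  unfolding sw_def by auto

lemma sw_in: assumes "swap_set n X" "v \<in> outcomes n" "i < n" shows "sw X i v \<in> X"
proof -
  have "(v, flip i v) \<in> swaps n" using assms(2,3) flip_out diffs_flip unfolding swaps_def by auto
  then show ?thesis using assms(1) unfolding swap_set_def sw_def by auto
qed

lemma swap_var_d: "diffs a b = {i} \<Longrightarrow> swap_var (a, b) = i"
  unfolding swap_var_def fst_conv snd_conv by (rule the_equality) auto

lemma swap_var_sw: "swap_var (sw X i v) = i"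
proof (cases "sw X i v = (v, flip i v)")
  case True then show ?thesis using swap_var_d diffs_flip by metis
next
  case False then have "sw X i v = (flip i v, v)" using sw_cases by metis
  then show ?thesis using swap_var_d diffs_flip by metis
qed

lemma g_flip: "fst N i \<noteq> Some j \<Longrightarrow> g N i (flip j v) = g N i v"
  unfolding g_def flip_def by (simp add: ctx_upd)

lemma concept_sw:
  assumes T: "tree_cpnet n N" and v: "v \<in> outcomes n" and i: "i < n"
  shows "concept n N (sw X i v) \<longleftrightarrow> fst (sw X i v) i = g N i v"
proof -
  have noself: "fst N i \<noteq> Some i" using T unfolding tree_cpnet_def by auto
  have fv: "flip i v \<in> outcomes n" using flip_out[OF v i] .
  have gf: "g N i (flip i v) = g N i v" using g_flip[OF noself] .
  show ?thesis
  proof (cases "sw X i v = (v, flip i v)")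
    case True
    then show ?thesis using concept_swap[OF T v fv i] diffs_flip by simp
  next
    case False
    then have "sw X i v = (flip i v, v)" using sw_cases by metis
    then show ?thesis using concept_swap[OF T fv v i] diffs_flip gf by simp
  qed
qed

lemma sw_F1:
  assumes "swap_set n X" "v \<in> outcomes n" "i < n" "j < n" "j \<noteq> i"
  shows "sw X i (flip j v) \<in> F1 n X (sw X i v)"
proof -
  have in1: "sw X i (flip j v) \<in> X" using sw_in assms flip_out by blast
  have "{fst (sw X i (flip j v)), snd (sw X i (flip j v))} = {flip j v, flip i (flip j v)}"
    using sw_cases[of X i "flip j v"] by auto
  moreover have "{flip j (fst (sw X i v)), flip j (snd (sw X i v))} = {flip j v, flip i (flip j v)}"
    using sw_cases[of X i v] flip_comm[of i j v] by auto
  ultimately show ?thesis unfolding F1_def using in1 swap_var_sw assms(4,5) by auto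
qed

lemma sw_fst_j: "j \<noteq> i \<Longrightarrow> fst (sw X i (flip j v)) j \<noteq> v j"
  using sw_cases[of X i "flip j v"] unfolding flip_def by auto

lemma sw_fst_m: "m \<noteq> i \<Longrightarrow> m \<noteq> j \<Longrightarrow> fst (sw X i (flip j v)) m = v m"
  using sw_cases[of X i "flip j v"] unfolding flip_def by auto

lemma sw_inj: "inj_on (\<lambda>j. sw X i (flip j v)) {j. j \<noteq> i}"
proof (rule inj_onI)
  fix j j' assume a: "j \<in> {j. j \<noteq> i}" "j' \<in> {j. j \<noteq> i}" and e: "sw X i (flip j v) = sw X i (flip j' v)"
  show "j = j'"
  proof (rule ccontr)
    assume "j \<noteq> j'"
    then have "fst (sw X i (flip j' v)) j = v j" using sw_fst_m[of j i j' X v] a by auto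
    then show False using sw_fst_j[of j i X v] a e by auto
  qed
qed

lemma F1_finite: "finite (F1 n X x)"
proof -
  have "F1 n X x \<subseteq> (\<Union>j<n. {(flip j (fst x), flip j (snd x)), (flip j (snd x), flip j (fst x))})"
  proof
    fix y assume "y \<in> F1 n X x"
    then obtain j where j: "j < n" "{fst y, snd y} = {flip j (fst x), flip j (snd x)}"
      unfolding F1_def by auto
    then have "y = (flip j (fst x), flip j (snd x)) \<or> y = (flip j (snd x), flip j (fst x))"
      by (cases y) (auto simp: doubleton_eq_iff)
    then show "y \<in> (\<Union>j<n. {(flip j (fst x), flip j (snd x)), (flip j (snd x), flip j (fst x))})"
      using j by auto
  qed
  then show ?thesis by (rule finite_subset) auto
qed


definition vote :: "('a \<Rightarrow> bool option) \<Rightarrow> 'a \<Rightarrow> swap \<Rightarrow> nat \<Rightarrow> bool option" where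
  "vote tr a q i = map_option (\<lambda>c. fst q i = c) (tr a)"

definition dec :: "('a \<Rightarrow> bool option) \<Rightarrow> nat \<Rightarrow> swap set \<Rightarrow> nat \<Rightarrow> outcome \<Rightarrow> (nat \<Rightarrow> 'a) \<Rightarrow> bool" where
  "dec tr n X i v ans \<longleftrightarrow>
     card {j. j < n \<and> j \<noteq> i \<and> vote tr (ans j) (sw X i (flip j v)) i = Some True}
     > card {j. j < n \<and> j \<noteq> i \<and> vote tr (ans j) (sw X i (flip j v)) i = Some False}"

lemma dec_lemma:
  assumes "card {j. j < n \<and> j \<noteq> i \<and> vote tr (ans j) (sw X i (flip j v)) i = Some (\<not> b)}
     < card {j. j < n \<and> j \<noteq> i \<and> vote tr (ans j) (sw X i (flip j v)) i = Some b}"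
  shows "dec tr n X i v ans = b"
  using assms unfolding dec_def by (cases b) auto

lemma card_three:
  assumes "finite J" "J \<subseteq> G \<union> A \<union> P"
  shows "card J \<le> card (J \<inter> G) + card (J \<inter> A) + card (J \<inter> P)"
proof -
  have "J = (J \<inter> G) \<union> (J \<inter> A) \<union> (J \<inter> P)" using assms(2) by auto
  then have "card J = card ((J \<inter> G) \<union> (J \<inter> A) \<union> (J \<inter> P))" by simp
  also have "\<dots> \<le> card ((J \<inter> G) \<union> (J \<inter> A)) + card (J \<inter> P)" by (rule card_Un_le)
  also have "\<dots> \<le> card (J \<inter> G) + card (J \<inter> A) + card (J \<inter> P)" using card_Un_le by simp
  finally show ?thesis .
qed

lemma robust_core:
  fixes tr :: "'a \<Rightarrow> bool option" and orc :: "swap \<Rightarrow> 'a"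
  assumes T: "tree_cpnet n N" and S: "swap_set n X" and v: "v \<in> outcomes n" and i: "i < n"
    and ans: "\<And>j. j < n \<Longrightarrow> j \<noteq> i \<Longrightarrow> ans j = orc (sw X i (flip j v))"
    and good: "\<And>q. q \<in> X \<Longrightarrow> q \<notin> L \<Longrightarrow> tr (orc q) = Some (concept n N q)"
  shows "card {j. j < n \<and> j \<noteq> i \<and> vote tr (ans j) (sw X i (flip j v)) i = Some (g N i v)} + 
           card {j. j < n \<and> j \<noteq> i \<and> sw X i (flip j v) \<in> L} + 1 \<ge> n - 1"
    and "{j. j < n \<and> j \<noteq> i \<and> vote tr (ans j) (sw X i (flip j v)) i = Some (\<not> g N i v)}
          \<subseteq> {j. fst N i = Some j} \<union> {j. j < n \<and> j \<noteq> i \<and> sw X i (flip j v) \<in> L \<and> tr (orc (sw X i (flip j v))) \<noteq> None}"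
proof -
  define J where "J = {j. j < n \<and> j \<noteq> i}"
  define G where "G = {j. j < n \<and> j \<noteq> i \<and> vote tr (ans j) (sw X i (flip j v)) i = Some (g N i v)}"
  define A where "A = {j. j < n \<and> j \<noteq> i \<and> sw X i (flip j v) \<in> L}"
  define P where "P = {j. fst N i = Some j}"
  have corr: "vote tr (ans j) (sw X i (flip j v)) i = Some (g N i v)"
    if "j < n" "j \<noteq> i" "sw X i (flip j v) \<notin> L" "fst N i \<noteq> Some j" for j
  proof -
    have fo: "flip j v \<in> outcomes n" using flip_out v that(1) by blast
    have a: "ans j = orc (sw X i (flip j v))" using ans that(1,2) by blast
    have inx: "sw X i (flip j v) \<in> X" using sw_in[OF S fo i] .
    have t: "tr (ans j) = Some (concept n N (sw X i (flip j v)))" unfolding a using good[OF inx that(3)] .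
    have c: "concept n N (sw X i (flip j v)) = (fst (sw X i (flip j v)) i = g N i v)"
      using concept_sw[OF T fo i] g_flip[OF that(4)] by simp
    show ?thesis unfolding vote_def t c by (cases "fst (sw X i (flip j v)) i") simp_all
  qed
  have cJ: "card J = n - 1"
  proof -
    have "J = {..<n} - {i}" by (auto simp: J_def)
    then show ?thesis using i by simp
  qed
  have cP: "card (J \<inter> P) \<le> 1"
  proof (cases "fst N i")
    case None then show ?thesis by (simp add: P_def)
  next
    case (Some p)
    then have "J \<inter> P \<subseteq> {p}" by (auto simp: P_def)
    then show ?thesis using card_mono[of "{p}" "J \<inter> P"] by simp
  qed
  have "J \<subseteq> G \<union> A \<union> P"
  proof
    fix j assume "j \<in> J"
    then have j: "j < n" "j \<noteq> i" by (auto simp: J_def)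
    show "j \<in> G \<union> A \<union> P"
    proof (cases "sw X i (flip j v) \<in> L \<or> fst N i = Some j")
      case True then show ?thesis using j by (auto simp: A_def P_def)
    next
      case False then show ?thesis using j corr[OF j] by (auto simp: G_def)
    qed
  qed
  then have "card J \<le> card (J \<inter> G) + card (J \<inter> A) + card (J \<inter> P)"
    by (intro card_three) (auto simp: J_def)
  moreover have "J \<inter> G = G" "J \<inter> A = A" by (auto simp: J_def G_def A_def)
  ultimately show "card G + card A + 1 \<ge> n - 1" using cJ cP by (simp only:)
  show "{j. j < n \<and> j \<noteq> i \<and> vote tr (ans j) (sw X i (flip j v)) i = Some (\<not> g N i v)}
          \<subseteq> {j. fst N i = Some j} \<union> {j. j < n \<and> j \<noteq> i \<and> sw X i (flip j v) \<in> L \<and> tr (orc (sw X i (flip j v))) \<noteq> None}"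
  proof
    fix j assume j: "j \<in> {j. j < n \<and> j \<noteq> i \<and> vote tr (ans j) (sw X i (flip j v)) i = Some (\<not> g N i v)}"
    show "j \<in> {j. fst N i = Some j} \<union> {j. j < n \<and> j \<noteq> i \<and> sw X i (flip j v) \<in> L \<and> tr (orc (sw X i (flip j v))) \<noteq> None}"
    proof (cases "fst N i = Some j")
      case True then show ?thesis by simp
    next
      case nP: False
      have j2: "j < n" "j \<noteq> i" "vote tr (ans j) (sw X i (flip j v)) i = Some (\<not> g N i v)" using j by auto
      show ?thesis
      proof (cases "sw X i (flip j v) \<in> L")
        case False
        then have "vote tr (ans j) (sw X i (flip j v)) i = Some (g N i v)" using corr j2 nP by blast
        then show ?thesis using j2(3) by simp
      next
        case True
        have a: "ans j = orc (sw X i (flip j v))" using ans j2 by blast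
        have "tr (orc (sw X i (flip j v))) \<noteq> None" using j2(3) unfolding vote_def a by auto
        then show ?thesis using True j2 by simp
      qed
    qed
  qed
qed

lemma card_A_le:
  assumes S: "swap_set n X" and v: "v \<in> outcomes n" and i: "i < n"
  shows "card {j. j < n \<and> j \<noteq> i \<and> sw X i (flip j v) \<in> L} \<le> card (F1 n X (sw X i v) \<inter> L)"
proof -
  let ?A = "{j. j < n \<and> j \<noteq> i \<and> sw X i (flip j v) \<in> L}"
  have "inj_on (\<lambda>j. sw X i (flip j v)) ?A" using sw_inj by (rule inj_on_subset) auto
  moreover have "(\<lambda>j. sw X i (flip j v)) ` ?A \<subseteq> F1 n X (sw X i v) \<inter> L"
    using sw_F1[OF S v i] by auto
  moreover have "finite (F1 n X (sw X i v) \<inter> L)" using F1_finite by blast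
  ultimately show ?thesis by (simp add: card_inj_on_le)
qed




lemma card_par: "card {j. fst N i = Some j} \<le> 1" "finite {j. fst N i = Some j}"
  by (cases "fst N i"; simp)+

lemma robust_lim:
  assumes T: "tree_cpnet n N" and S: "swap_set n X" and v: "v \<in> outcomes n" and i: "i < n"
    and H: "4 < n \<and> (\<forall>x\<in>X. card (F1 n X x \<inter> L) \<le> n - 4)"
    and ans: "\<And>j. j < n \<Longrightarrow> j \<noteq> i \<Longrightarrow> ans j = limited_oracle n N L (sw X i (flip j v))"
  shows "dec (\<lambda>x. x) n X i v ans = g N i v"
proof -
  have good: "\<And>q. q \<in> X \<Longrightarrow> q \<notin> L \<Longrightarrow> (\<lambda>x. x) (limited_oracle n N L q) = Some (concept n N q)"
    by (simp add: limited_oracle_def)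
  note rc = robust_core[where tr="\<lambda>x. x" and orc="limited_oracle n N L" and L=L, OF T S v i ans good]
  let ?G = "{j. j < n \<and> j \<noteq> i \<and> vote (\<lambda>x. x) (ans j) (sw X i (flip j v)) i = Some (g N i v)}"
  let ?B = "{j. j < n \<and> j \<noteq> i \<and> vote (\<lambda>x. x) (ans j) (sw X i (flip j v)) i = Some (\<not> g N i v)}"
  let ?A = "{j. j < n \<and> j \<noteq> i \<and> sw X i (flip j v) \<in> L}"
  have "card ?A \<le> card (F1 n X (sw X i v) \<inter> L)" by (rule card_A_le[OF S v i])
  also have "\<dots> \<le> n - 4" using H sw_in[OF S v i] by blast
  finally have cA: "card ?A \<le> n - 4" .
  have "?B \<subseteq> {j. fst N i = Some j}"
  proof
    fix j assume "j \<in> ?B"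
    then have "j \<in> {j. fst N i = Some j} \<union> {j. j < n \<and> j \<noteq> i \<and> sw X i (flip j v) \<in> L \<and> limited_oracle n N L (sw X i (flip j v)) \<noteq> None}"
      using rc(2) by blast
    then show "j \<in> {j. fst N i = Some j}" by (auto simp: limited_oracle_def)
  qed
  then have "card ?B \<le> card {j. fst N i = Some j}" by (rule card_mono[OF card_par(2)])
  then have cB: "card ?B \<le> 1" using card_par(1)[of N i] by linarith
  have n4: "4 < n" using H by blast
  have "card ?G \<ge> 2" using rc(1) cA n4 by linarith
  then have "card ?B < card ?G" using cB by linarith
  then show ?thesis by (rule dec_lemma)
qed

lemma robust_mal:
  assumes T: "tree_cpnet n N" and S: "swap_set n X" and v: "v \<in> outcomes n" and i: "i < n"
    and H: "4 < n \<and> (\<forall>x\<in>X. card (F1 n X x \<inter> L) \<le> (n - 1) div 2 - 2)"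
    and ans: "\<And>j. j < n \<Longrightarrow> j \<noteq> i \<Longrightarrow> ans j = malicious_oracle n N L (sw X i (flip j v))"
  shows "dec Some n X i v ans = g N i v"
proof -
  have good: "\<And>q. q \<in> X \<Longrightarrow> q \<notin> L \<Longrightarrow> Some (malicious_oracle n N L q) = Some (concept n N q)"
    by (simp add: malicious_oracle_def)
  note rc = robust_core[where tr=Some and orc="malicious_oracle n N L" and L=L, OF T S v i ans good]
  let ?G = "{j. j < n \<and> j \<noteq> i \<and> vote Some (ans j) (sw X i (flip j v)) i = Some (g N i v)}"
  let ?B = "{j. j < n \<and> j \<noteq> i \<and> vote Some (ans j) (sw X i (flip j v)) i = Some (\<not> g N i v)}"
  let ?A = "{j. j < n \<and> j \<noteq> i \<and> sw X i (flip j v) \<in> L}"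
  have "card ?A \<le> card (F1 n X (sw X i v) \<inter> L)" by (rule card_A_le[OF S v i])
  also have "\<dots> \<le> (n - 1) div 2 - 2" using H sw_in[OF S v i] by blast
  finally have cA: "card ?A \<le> (n - 1) div 2 - 2" .
  have "?B \<subseteq> {j. fst N i = Some j} \<union> ?A" using rc(2) by blast
  then have "card ?B \<le> card ({j. fst N i = Some j} \<union> ?A)"
    using card_par(2) by (intro card_mono) auto
  also have "\<dots> \<le> card {j. fst N i = Some j} + card ?A" by (rule card_Un_le)
  finally have cB: "card ?B \<le> 1 + ((n - 1) div 2 - 2)" using card_par(1)[of N i] cA by linarith
  have cG: "card ?G + ((n - 1) div 2 - 2) + 1 \<ge> n - 1" using rc(1) cA by linarith
  have n4: "4 < n" using H by blast
  have ar: "1 + ((n - 1) div 2 - 2) < n - 1 - ((n - 1) div 2 - 2) - 1"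
  proof -
    define t where "t = (n - 1) div 2"
    have t1: "2 * t \<le> n - 1" unfolding t_def by simp
    have "4 div 2 \<le> (n - 1) div 2" by (rule div_le_mono) (use n4 in simp)
    then have t2: "2 \<le> t" unfolding t_def by simp
    have "1 + (t - 2) < n - 1 - (t - 2) - 1" using t1 t2 n4 by linarith
    then show ?thesis unfolding t_def .
  qed
  have "card ?B < card ?G" using cB cG ar by linarith
  then show ?thesis by (rule dec_lemma)
qed




definition Jl :: "nat \<Rightarrow> nat \<Rightarrow> nat list" where "Jl n i = filter (\<lambda>j. j \<noteq> i) [0..<n]"
definition qfam :: "swap set \<Rightarrow> nat \<Rightarrow> (nat \<Rightarrow> outcome) \<Rightarrow> nat \<times> nat \<Rightarrow> swap" where
  "qfam X i W kj = sw X i (flip (snd kj) (W (fst kj)))"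
definition W1 :: "nat \<Rightarrow> nat \<Rightarrow> outcome" where "W1 n k = (if k = 0 then (\<lambda>_. False) else (\<lambda>j. j < n))"
definition wb :: "nat \<Rightarrow> nat \<Rightarrow> outcome" where "wb n k = (\<lambda>j. j < n \<and> odd (j div 2^k))"
definition Bn :: "nat \<Rightarrow> nat" where "Bn n = (LEAST b. n < 2^b)"
definition dk :: "('a \<Rightarrow> bool option) \<Rightarrow> nat \<Rightarrow> swap set \<Rightarrow> nat \<Rightarrow> (nat \<Rightarrow> outcome) \<Rightarrow> (nat \<times> nat \<Rightarrow> 'a) \<Rightarrow> nat \<Rightarrow> bool" where
  "dk tr n X i W a k = dec tr n X i (W k) (\<lambda>j. a (k, j))"
definition decode :: "nat \<Rightarrow> (nat \<Rightarrow> bool) \<Rightarrow> nat" where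
  "decode B bs = (LEAST p. \<forall>k<B. odd (p div 2^k) = bs k)"

definition learn_var :: "('a \<Rightarrow> bool option) \<Rightarrow> nat \<Rightarrow> swap set \<Rightarrow> nat \<Rightarrow> (swap, 'a, nat option \<times> (bool \<Rightarrow> bool)) strat" where
  "learn_var tr n X i = sbind (askf (List.product [0,1] (Jl n i)) (qfam X i (W1 n))) (\<lambda>a1.
     (if dk tr n X i (W1 n) a1 0 = dk tr n X i (W1 n) a1 1
      then Done (None, \<lambda>_. dk tr n X i (W1 n) a1 0)
      else sbind (askf (List.product [0..<Bn n] (Jl n i)) (qfam X i (wb n))) (\<lambda>a2.
        Done (Some (decode (Bn n) (\<lambda>k. dk tr n X i (wb n) a2 k = dk tr n X i (W1 n) a1 1)),
              \<lambda>b. if b then dk tr n X i (W1 n) a1 1 else dk tr n X i (W1 n) a1 0))))"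

definition assemble :: "nat \<Rightarrow> (nat option \<times> (bool \<Rightarrow> bool)) list \<Rightarrow> cpnet" where
  "assemble n rs = (\<lambda>i. if i < n then fst (rs ! i) else None, \<lambda>i. if i < n then snd (rs ! i) else (\<lambda>_. False))"

definition learner :: "('a \<Rightarrow> bool option) \<Rightarrow> nat \<Rightarrow> swap set \<Rightarrow> (swap, 'a, cpnet) strat" where
  "learner tr n X = sbind (seqall (map (learn_var tr n X) [0..<n])) (\<lambda>rs. Done (assemble n rs))"

lemma set_Jl: "set (Jl n i) = {j. j < n \<and> j \<noteq> i}"
  unfolding Jl_def by auto

lemma len_Jl: assumes "i < n" shows "length (Jl n i) = n - 1"
proof -
  have "distinct (Jl n i)" by (simp add: Jl_def)
  then have "length (Jl n i) = card (set (Jl n i))" by (rule distinct_card[symmetric])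
  also have "set (Jl n i) = {..<n} - {i}" unfolding set_Jl by auto
  finally show ?thesis using assms by simp
qed

lemma ask_ok:
  assumes S: "swap_set n X" and i: "i < n" and W: "\<And>k. k \<in> set ks \<Longrightarrow> W k \<in> outcomes n"
  shows "\<exists>a. run orc X (askf (List.product ks (Jl n i)) (qfam X i W)) = Some (a, length ks * (n - 1)) \<and>
             (\<forall>k\<in>set ks. \<forall>j. j < n \<longrightarrow> j \<noteq> i \<longrightarrow> a (k, j) = orc (sw X i (flip j (W k))))"
proof -
  have "set (map (qfam X i W) (List.product ks (Jl n i))) \<subseteq> X"
  proof
    fix q assume "q \<in> set (map (qfam X i W) (List.product ks (Jl n i)))"
    then obtain k j where kj: "k \<in> set ks" "j < n" "q = sw X i (flip j (W k))"
      by (auto simp: qfam_def set_Jl)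
    then show "q \<in> X" using sw_in[OF S flip_out[OF W[OF kj(1)] kj(2)] i] by simp
  qed
  from run_askf[OF this, of orc] obtain a where
    a: "run orc X (askf (List.product ks (Jl n i)) (qfam X i W)) = Some (a, length (List.product ks (Jl n i)))"
       "\<forall>j\<in>set (List.product ks (Jl n i)). a j = orc (qfam X i W j)" by blast
  show ?thesis
  proof (intro exI conjI)
    show "run orc X (askf (List.product ks (Jl n i)) (qfam X i W)) = Some (a, length ks * (n - 1))"
      using a(1) len_Jl[OF i] by simp
    show "\<forall>k\<in>set ks. \<forall>j. j < n \<longrightarrow> j \<noteq> i \<longrightarrow> a (k, j) = orc (sw X i (flip j (W k)))"
      using a(2) by (auto simp: set_Jl qfam_def)
  qed
qed

lemma bits_eq: fixes j p :: nat shows "j < 2^B \<Longrightarrow> p < 2^B \<Longrightarrow> (\<forall>k<B. odd (j div 2^k) = odd (p div 2^k)) \<Longrightarrow> j = p"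
proof (induction B arbitrary: j p)
  case 0 then show ?case by simp
next
  case (Suc B)
  have "j div 2 < 2^B" "p div 2 < 2^B" using Suc.prems by auto
  moreover have "\<forall>k<B. odd (j div 2 div 2^k) = odd (p div 2 div 2^k)"
  proof (intro allI impI)
    fix k assume "k < B"
    then have "Suc k < Suc B" by simp
    then have "odd (j div 2^(Suc k)) = odd (p div 2^(Suc k))" using Suc.prems(3) by blast
    then show "odd (j div 2 div 2^k) = odd (p div 2 div 2^k)" by (simp add: div_mult2_eq power_Suc)
  qed
  ultimately have "j div 2 = p div 2" using Suc.IH by blast
  moreover have "odd j = odd p" using Suc.prems(3)[rule_format, of 0] by simp
  ultimately show ?case by (metis div_mult_mod_eq odd_iff_mod_2_eq_one parity_cases)
qed

lemma decode_ok: fixes p :: nat assumes "p < 2^B" shows "decode B (\<lambda>k. odd (p div 2^k)) = p"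
  unfolding decode_def
proof (rule Least_equality)
  show "\<forall>k<B. odd (p div 2^k) = odd (p div 2^k)" by simp
  fix y :: nat assume y: "\<forall>k<B. odd (y div 2^k) = odd (p div 2^k)"
  show "p \<le> y"
  proof (rule ccontr)
    assume "\<not> p \<le> y"
    then have "y < 2^B" using assms by simp
    then have "y = p" using bits_eq[OF _ assms y] by simp
    then show False using \<open>\<not> p \<le> y\<close> by simp
  qed
qed

lemma Bn_gt: "n < 2 ^ Bn n"
  unfolding Bn_def by (rule LeastI_ex) (use less_exp in blast)

lemma Bn_le: "Bn n \<le> n"
  unfolding Bn_def by (rule Least_le) (rule less_exp)

lemma Bn_pos: "1 \<le> n \<Longrightarrow> 1 \<le> Bn n"
  using Bn_gt[of n] by (cases "Bn n") auto

lemma Bn_min: "1 \<le> n \<Longrightarrow> 2 ^ (Bn n - 1) \<le> n"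
proof -
  assume n: "1 \<le> n"
  have "Bn n - 1 < Bn n" using Bn_pos[OF n] by simp
  then have "\<not> n < 2 ^ (Bn n - 1)" unfolding Bn_def by (rule not_less_Least)
  then show ?thesis by simp
qed

lemma W1_out: "W1 n k \<in> outcomes n" by (simp add: W1_def outcomes_def)
lemma wb_out: "wb n k \<in> outcomes n" by (simp add: wb_def outcomes_def)

lemma g_W10: "g N i (W1 n 0) = snd N i False"
  unfolding g_def ctx_def W1_def by (cases "fst N i") auto

lemma g_W11_None: "fst N i = None \<Longrightarrow> g N i (W1 n 1) = snd N i False"
  unfolding g_def ctx_def by simp

lemma g_W11_Some: "fst N i = Some p \<Longrightarrow> p < n \<Longrightarrow> g N i (W1 n 1) = snd N i True"
  unfolding g_def ctx_def W1_def by simp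

lemma g_wb: "fst N i = Some p \<Longrightarrow> p < n \<Longrightarrow> g N i (wb n k) = snd N i (odd (p div 2^k))"
  unfolding g_def ctx_def wb_def by simp

definition vcost :: "nat \<Rightarrow> cpnet \<Rightarrow> nat \<Rightarrow> nat" where
  "vcost n N i = 2 * (n - 1) + (if fst N i = None then 0 else Bn n * (n - 1))"

lemma learn_var_ok:
  assumes T: "tree_cpnet n N" and S: "swap_set n X" and i: "i < n"
    and R: "\<And>v ans. v \<in> outcomes n \<Longrightarrow> (\<And>j. j < n \<Longrightarrow> j \<noteq> i \<Longrightarrow> ans j = orc (sw X i (flip j v)))
             \<Longrightarrow> dec tr n X i v ans = g N i v"
  shows "run orc X (learn_var tr n X i) = Some ((fst N i, snd N i), vcost n N i)"
proof -
  obtain a1 where a1: "run orc X (askf (List.product [0,1] (Jl n i)) (qfam X i (W1 n))) = Some (a1, length [0::nat,1] * (n - 1))"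
    "\<forall>k\<in>set [0::nat,1]. \<forall>j. j < n \<longrightarrow> j \<noteq> i \<longrightarrow> a1 (k, j) = orc (sw X i (flip j (W1 n k)))"
    using ask_ok[OF S i, of "[0,1]" "W1 n" orc] W1_out by blast
  have d1: "dk tr n X i (W1 n) a1 k = g N i (W1 n k)" if "k \<in> {0,1}" for k
    unfolding dk_def using that a1(2) by (intro R W1_out) auto
  have tN: "\<forall>i j. fst N i = Some j \<longrightarrow> i < n \<and> j < n \<and> j \<noteq> i"
    "\<forall>i<n. fst N i = None \<longrightarrow> snd N i True = snd N i False"
    "\<forall>i<n. fst N i \<noteq> None \<longrightarrow> snd N i True \<noteq> snd N i False"
    using T unfolding tree_cpnet_def by blast+
  show ?thesis
  proof (cases "fst N i")
    case None
    have e: "dk tr n X i (W1 n) a1 0 = snd N i False" "dk tr n X i (W1 n) a1 1 = snd N i False"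
      using d1 g_W10 g_W11_None[OF None] by auto
    have sn: "(\<lambda>_. snd N i False) = snd N i"
    proof
      fix b show "snd N i False = snd N i b" using tN(2) i None by (cases b) auto
    qed
    have "run orc X (learn_var tr n X i) = Some ((None, \<lambda>_. snd N i False), length [0::nat,1] * (n - 1) + 0)"
    proof -
      have c: "dk tr n X i (W1 n) a1 0 = dk tr n X i (W1 n) a1 1" using e by simp
      show ?thesis unfolding learn_var_def
        by (rule run_sbind[OF a1(1)]) (simp only: c simp_thms if_True run.simps e(2))
    qed
    then show ?thesis using None sn by (simp add: vcost_def)
  next
    case (Some p)
    have p: "p < n" using tN(1) Some by blast
    have ne: "snd N i True \<noteq> snd N i False" using tN(3) i Some by auto
    have e: "dk tr n X i (W1 n) a1 0 = snd N i False" "dk tr n X i (W1 n) a1 1 = snd N i True"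
      using d1 g_W10 g_W11_Some[OF Some p] by auto
    obtain a2 where a2: "run orc X (askf (List.product [0..<Bn n] (Jl n i)) (qfam X i (wb n))) = Some (a2, length [0..<Bn n] * (n - 1))"
      "\<forall>k\<in>set [0..<Bn n]. \<forall>j. j < n \<longrightarrow> j \<noteq> i \<longrightarrow> a2 (k, j) = orc (sw X i (flip j (wb n k)))"
      using ask_ok[OF S i, of "[0..<Bn n]" "wb n" orc] wb_out by blast
    have d2: "(dk tr n X i (wb n) a2 k = snd N i True) = odd (p div 2^k)" if "k < Bn n" for k
    proof -
      have "dk tr n X i (wb n) a2 k = g N i (wb n k)"
        unfolding dk_def using that a2(2) by (intro R wb_out) auto
      also have "\<dots> = snd N i (odd (p div 2^k))" by (rule g_wb[OF Some p])
      finally show ?thesis using ne by (cases "odd (p div 2^k)") auto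
    qed
    have dec: "decode (Bn n) (\<lambda>k. dk tr n X i (wb n) a2 k = snd N i True) = p"
    proof -
      have "decode (Bn n) (\<lambda>k. dk tr n X i (wb n) a2 k = snd N i True) = decode (Bn n) (\<lambda>k. odd (p div 2^k))"
        unfolding decode_def using d2 by (metis (no_types, lifting))
      also have "\<dots> = p" using decode_ok p Bn_gt[of n] by (meson less_trans)
      finally show ?thesis .
    qed
    have sn: "(\<lambda>b. if b then snd N i True else snd N i False) = snd N i"
    proof
      fix b show "(if b then snd N i True else snd N i False) = snd N i b" by (cases b) auto
    qed
    have r2: "run orc X (sbind (askf (List.product [0..<Bn n] (Jl n i)) (qfam X i (wb n))) (\<lambda>a2.
        Done (Some (decode (Bn n) (\<lambda>k. dk tr n X i (wb n) a2 k = dk tr n X i (W1 n) a1 1)),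
              \<lambda>b. if b then dk tr n X i (W1 n) a1 1 else dk tr n X i (W1 n) a1 0)))
       = Some ((Some p, snd N i), length [0..<Bn n] * (n - 1) + 0)"
      by (rule run_sbind[OF a2(1)]) (simp only: e dec sn run.simps)
    have "run orc X (learn_var tr n X i) = Some ((Some p, snd N i), length [0::nat,1] * (n - 1) + (length [0..<Bn n] * (n - 1) + 0))"
    proof -
      have c: "(dk tr n X i (W1 n) a1 0 = dk tr n X i (W1 n) a1 1) = False" using e ne by simp
      show ?thesis unfolding learn_var_def
        by (rule run_sbind[OF a1(1)]) (simp only: c if_False, rule r2)
    qed
    then show ?thesis using Some by (simp add: vcost_def)
  qed
qed




definition qc :: "nat \<Rightarrow> cpnet \<Rightarrow> nat" where
  "qc n N = 2 * n * (n - 1) + Bn n * (n - 1) * num_edges N"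

lemma edges_eq: assumes "tree_cpnet n N" shows "{i. fst N i \<noteq> None} = {i \<in> {..<n}. fst N i \<noteq> None}"
proof -
  have "\<forall>i\<ge>n. fst N i = None" using assms unfolding tree_cpnet_def by blast
  then have a: "\<And>i. fst N i \<noteq> None \<Longrightarrow> i < n" by (metis not_le)
  show ?thesis using a by auto
qed

lemma assemble_ok:
  assumes T: "tree_cpnet n N"
  shows "assemble n (map (\<lambda>i. (fst N i, snd N i)) [0..<n]) = N"
proof -
  have a: "\<forall>i\<ge>n. fst N i = None \<and> snd N i = (\<lambda>_. False)" using T unfolding tree_cpnet_def by blast
  let ?rs = "map (\<lambda>i. (fst N i, snd N i)) [0..<n]"
  have "(\<lambda>i. if i < n then fst (?rs ! i) else None) = fst N"
  proof
    fix i show "(if i < n then fst (?rs ! i) else None) = fst N i" using a by (cases "i < n") auto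
  qed
  moreover have "(\<lambda>i. if i < n then snd (?rs ! i) else (\<lambda>_. False)) = snd N"
  proof
    fix i show "(if i < n then snd (?rs ! i) else (\<lambda>_. False)) = snd N i" using a by (cases "i < n") auto
  qed
  ultimately show ?thesis unfolding assemble_def by (simp add: prod_eq_iff)
qed

lemma sum_vcost: assumes T: "tree_cpnet n N"
  shows "sum_list (map (vcost n N) [0..<n]) = qc n N"
proof -
  have "sum_list (map (vcost n N) [0..<n]) = (\<Sum>i<n. vcost n N i)"
    by (simp add: sum_set_upt_conv_sum_list_nat[symmetric] lessThan_atLeast0)
  also have "\<dots> = (\<Sum>i<n. 2 * (n - 1)) + (\<Sum>i<n. (if fst N i = None then 0 else Bn n * (n - 1)))"
    unfolding vcost_def by (rule sum.distrib)
  also have "(\<Sum>i<n. (if fst N i = None then 0 else Bn n * (n - 1))) = (\<Sum>i\<in>{i \<in> {..<n}. fst N i \<noteq> None}. Bn n * (n - 1))"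
  proof -
    have "(\<lambda>i. if fst N i = None then 0 else Bn n * (n - 1)) = (\<lambda>i. if fst N i \<noteq> None then Bn n * (n - 1) else 0)"
      by auto
    then show ?thesis using sum.inter_filter[of "{..<n}" "\<lambda>i. Bn n * (n - 1)" "\<lambda>i. fst N i \<noteq> None"] by (simp only: finite_lessThan simp_thms)
  qed
  also have "\<dots> = Bn n * (n - 1) * num_edges N"
    using edges_eq[OF T] by (simp add: num_edges_def)
  finally show ?thesis by (simp add: qc_def)
qed

lemma learner_ok:
  assumes T: "tree_cpnet n N" and S: "swap_set n X"
    and R: "\<And>i v ans. i < n \<Longrightarrow> v \<in> outcomes n \<Longrightarrow> (\<And>j. j < n \<Longrightarrow> j \<noteq> i \<Longrightarrow> ans j = orc (sw X i (flip j v)))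
             \<Longrightarrow> dec tr n X i v ans = g N i v"
  shows "run orc X (learner tr n X) = Some (N, qc n N)"
proof -
  have "\<forall>i\<in>set [0..<n]. run orc X (learn_var tr n X i) = Some ((fst N i, snd N i), vcost n N i)"
    using learn_var_ok[OF T S _ R] by auto
  from run_seqall[OF this] have r: "run orc X (seqall (map (learn_var tr n X) [0..<n]))
      = Some (map (\<lambda>i. (fst N i, snd N i)) [0..<n], sum_list (map (vcost n N) [0..<n]))" .
  have "run orc X (learner tr n X) = Some (N, sum_list (map (vcost n N) [0..<n]) + 0)"
    unfolding learner_def by (rule run_sbind[OF r]) (simp add: assemble_ok[OF T])
  then show ?thesis using sum_vcost[OF T] by simp
qed

lemma Bn_log: assumes n: "2 \<le> n" shows "real (Bn n) \<le> 2 * log 2 (real n)"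
proof -
  have "2 ^ (Bn n - 1) \<le> n" using Bn_min n by simp
  then have "real (2 ^ (Bn n - 1)) \<le> real n" by linarith
  then have "log 2 (real (2 ^ (Bn n - 1))) \<le> log 2 (real n)"
    using n by (subst log_le_cancel_iff) auto
  then have a: "real (Bn n - 1) \<le> log 2 (real n)" by (simp add: log_nat_power)
  have "log 2 2 \<le> log 2 (real n)" using n by (subst log_le_cancel_iff) auto
  then have b: "1 \<le> log 2 (real n)" by simp
  have "real (Bn n) = real (Bn n - 1) + 1" using Bn_pos[of n] n by simp
  then show ?thesis using a b by linarith
qed

lemma edges_le: "tree_cpnet n N \<Longrightarrow> num_edges N \<le> n"
  unfolding num_edges_def using edges_eq[of n N] card_mono[of "{..<n}" "{i \<in> {..<n}. fst N i \<noteq> None}"]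
  by auto

lemma qc_bound1: assumes n: "4 < n" and T: "tree_cpnet n N"
  shows "real (qc n N) \<le> 2 * query_bound n N l"
proof -
  let ?e = "real (num_edges N)"
  have L: "real (Bn n) \<le> 2 * log 2 (real n)" using Bn_log n by simp
  have "real (Bn n * (n - 1) * num_edges N) \<le> (2 * log 2 (real n)) * real n * ?e"
  proof -
    have lg: "0 \<le> 2 * log 2 (real n)" using L by linarith
    have m: "real (Bn n) * real (n - 1) \<le> (2 * log 2 (real n)) * real n"
      by (rule mult_mono[OF L]) (use lg in auto)
    have "real (Bn n * (n - 1) * num_edges N) = real (Bn n) * real (n - 1) * ?e" by simp
    also have "\<dots> \<le> (2 * log 2 (real n)) * real n * ?e"
      by (rule mult_right_mono[OF m]) simp
    finally show ?thesis .
  qed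
  moreover have "real (2 * n * (n - 1)) \<le> 2 * real n ^ 2"
  proof -
    have "2 * n * (n - 1) \<le> 2 * n ^ 2" by (simp add: power2_eq_square)
    then show ?thesis by (metis of_nat_le_iff of_nat_mult of_nat_numeral of_nat_power)
  qed
  ultimately show ?thesis unfolding qc_def query_bound_def by (simp add: algebra_simps)
qed

lemma qc_bound2: assumes T: "tree_cpnet n N"
  shows "real (qc n N) \<le> 3 * real (n + cpt_size n N + l + 1) ^ 3"
proof -
  define M where "M = n + cpt_size n N + l + 1"
  have nM: "n \<le> M" unfolding M_def by simp
  have "qc n N \<le> 2 * n * n + n * n * n"
  proof -
    have "Bn n * (n - 1) * num_edges N \<le> n * n * n"
      using Bn_le[of n] edges_le[OF T] by (intro mult_le_mono) auto
    moreover have "2 * n * (n - 1) \<le> 2 * n * n" by simp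
    ultimately show ?thesis unfolding qc_def by linarith
  qed
  also have "\<dots> \<le> 2 * M * M * M + M * M * M"
  proof -
    have "n * n \<le> M * M" using nM by (intro mult_le_mono) auto
    then have "n * n \<le> M * M * M" using nM M_def by (metis le_trans mult_le_mono1 mult.commute mult_le_mono2 mult_1_right Suc_eq_plus1 le_add2 One_nat_def)
    moreover have "n * n * n \<le> M * M * M" using nM by (intro mult_le_mono) auto
    ultimately show ?thesis by simp
  qed
  also have "\<dots> = 3 * M ^ 3" by (simp add: power3_eq_cube)
  finally have "qc n N \<le> 3 * M ^ 3" .
  then have "real (qc n N) \<le> real (3 * M ^ 3)" by linarith
  then show ?thesis unfolding M_def by simp
qed

lemma lw_generic:
  assumes H: "\<And>n X N L. swap_set n X \<Longrightarrow> tree_cpnet n N \<Longrightarrow> L \<subseteq> X \<Longrightarrow> P n X L \<Longrightarrow>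
              4 < n \<and> run (orc n N L) X (learner tr n X) = Some (N, qc n N)"
  shows "learns_with orc P (\<lambda>n N l. 2 * query_bound n N l)" "learnable orc P"
proof -
  show "learns_with orc P (\<lambda>n N l. 2 * query_bound n N l)"
    unfolding learns_with_def
  proof (intro exI[of _ "\<lambda>n X. learner tr n X"] allI impI)
    fix n X N L assume a: "swap_set n X" "tree_cpnet n N" "L \<subseteq> X" "P n X L"
    have h: "4 < n" "run (orc n N L) X (learner tr n X) = Some (N, qc n N)" using H[OF a] by auto
    show "\<exists>q. run (orc n N L) X (learner tr n X) = Some (N, q) \<and> real q \<le> 2 * query_bound n N (card L)"
      using h(2) qc_bound1[OF h(1) a(2)] by blast
  qed
  have "learns_with orc P (\<lambda>n N l. 3 * real (n + cpt_size n N + l + 1) ^ 3)"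
    unfolding learns_with_def
  proof (intro exI[of _ "\<lambda>n X. learner tr n X"] allI impI)
    fix n X N L assume a: "swap_set n X" "tree_cpnet n N" "L \<subseteq> X" "P n X L"
    have h: "4 < n" "run (orc n N L) X (learner tr n X) = Some (N, qc n N)" using H[OF a] by auto
    show "\<exists>q. run (orc n N L) X (learner tr n X) = Some (N, q) \<and> real q \<le> 3 * real (n + cpt_size n N + card L + 1) ^ 3"
      using h(2) qc_bound2[OF a(2)] by blast
  qed
  then show "learnable orc P" unfolding learnable_def by blast
qed

theorem corollary4:
  shows "(learnable limited_oracle
            (\<lambda>n X L. 4 < n \<and> (\<forall>x\<in>X. card (F1 n X x \<inter> L) \<le> n - 4))
          \<and> (\<exists>C. learns_with limited_oracle
            (\<lambda>n X L. 4 < n \<and> (\<forall>x\<in>X. card (F1 n X x \<inter> L) \<le> n - 4))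
            (\<lambda>n N l. C * query_bound n N l)))
       \<and> (learnable malicious_oracle
            (\<lambda>n X L. 4 < n \<and> (\<forall>x\<in>X. card (F1 n X x \<inter> L) \<le> (n - 1) div 2 - 2))
          \<and> (\<exists>C. learns_with malicious_oracle
            (\<lambda>n X L. 4 < n \<and> (\<forall>x\<in>X. card (F1 n X x \<inter> L) \<le> (n - 1) div 2 - 2))
            (\<lambda>n N l. C * query_bound n N l)))"
proof -
  have H1: "4 < n \<and> run (limited_oracle n N L) X (learner (\<lambda>x. x) n X) = Some (N, qc n N)"
    if a: "swap_set n X" "tree_cpnet n N" "L \<subseteq> X" "4 < n \<and> (\<forall>x\<in>X. card (F1 n X x \<inter> L) \<le> n - 4)" for n X N L
  proof -
    have R: "dec (\<lambda>x. x) n X i v ans = g N i v"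
      if "i < n" "v \<in> outcomes n" "\<And>j. j < n \<Longrightarrow> j \<noteq> i \<Longrightarrow> ans j = limited_oracle n N L (sw X i (flip j v))" for i v ans
      by (rule robust_lim[OF a(2) a(1) that(2) that(1) a(4) that(3)])
    have "run (limited_oracle n N L) X (learner (\<lambda>x. x) n X) = Some (N, qc n N)"
      by (rule learner_ok[OF a(2) a(1) R])
    then show ?thesis using a(4) by simp
  qed
  have H2: "4 < n \<and> run (malicious_oracle n N L) X (learner Some n X) = Some (N, qc n N)"
    if a: "swap_set n X" "tree_cpnet n N" "L \<subseteq> X" "4 < n \<and> (\<forall>x\<in>X. card (F1 n X x \<inter> L) \<le> (n - 1) div 2 - 2)" for n X N L
  proof -
    have R: "dec Some n X i v ans = g N i v"
      if "i < n" "v \<in> outcomes n" "\<And>j. j < n \<Longrightarrow> j \<noteq> i \<Longrightarrow> ans j = malicious_oracle n N L (sw X i (flip j v))" for i v ans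
      by (rule robust_mal[OF a(2) a(1) that(2) that(1) a(4) that(3)])
    have "run (malicious_oracle n N L) X (learner Some n X) = Some (N, qc n N)"
      by (rule learner_ok[OF a(2) a(1) R])
    then show ?thesis using a(4) by simp
  qed
  have A: "learns_with limited_oracle (\<lambda>n X L. 4 < n \<and> (\<forall>x\<in>X. card (F1 n X x \<inter> L) \<le> n - 4)) (\<lambda>n N l. 2 * query_bound n N l)"
          "learnable limited_oracle (\<lambda>n X L. 4 < n \<and> (\<forall>x\<in>X. card (F1 n X x \<inter> L) \<le> n - 4))"
    by (rule lw_generic[of _ limited_oracle "\<lambda>x. x", OF H1], assumption+)+
  have B: "learns_with malicious_oracle (\<lambda>n X L. 4 < n \<and> (\<forall>x\<in>X. card (F1 n X x \<inter> L) \<le> (n - 1) div 2 - 2)) (\<lambda>n N l. 2 * query_bound n N l)"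
          "learnable malicious_oracle (\<lambda>n X L. 4 < n \<and> (\<forall>x\<in>X. card (F1 n X x \<inter> L) \<le> (n - 1) div 2 - 2))"
    by (rule lw_generic[of _ malicious_oracle Some, OF H2], assumption+)+
  show ?thesis
  proof (intro conjI)
    show "\<exists>C. learns_with limited_oracle (\<lambda>n X L. 4 < n \<and> (\<forall>x\<in>X. card (F1 n X x \<inter> L) \<le> n - 4)) (\<lambda>n N l. C * query_bound n N l)"
      using A(1) by (intro exI[of _ 2])
    show "\<exists>C. learns_with malicious_oracle (\<lambda>n X L. 4 < n \<and> (\<forall>x\<in>X. card (F1 n X x \<inter> L) \<le> (n - 1) div 2 - 2)) (\<lambda>n N l. C * query_bound n N l)"
      using B(1) by (intro exI[of _ 2])
  qed (fact A(2) B(2))+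
qed


end
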